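(* Let $\mathsf{D}$ be an optiongraph and let $\mathrm{Con}(\mathsf{D})$ be the set of congruence relations on $\mathsf{D}$. Then the union ${\bowtie}:=\bigcup\mathrm{Con}(\mathsf{D})$ is a congruence relation on $\mathsf{D}$ (hence the maximum congruence relation).
   Context: An optiongraph is a nonempty set $\mathsf{D}$ of positions together with an option function $\mathrm{Opt}:\mathsf{D}\to 2^{\mathsf{D}}$. For an equivalence relation $\theta$ on $\mathsf{D}$, write $[p]_\theta$ for the class of $p$ and, for $S\subseteq\mathsf{D}$, $[S]_\theta:=\{[s]_\theta\mid s\in S\}$. An equivalence relation $\theta$ on $\mathsf{D}$ is a congruence relation if $p\mathrel{\theta}q$ implies $[\mathrm{Opt}(p)]_\theta=[\mathrm{Opt}(q)]_\theta$. *)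

theory Defs
  imports Main
begin

definition optiongraph :: "'a set \<Rightarrow> ('a \<Rightarrow> 'a set) \<Rightarrow> bool" where
  "optiongraph D Opt \<longleftrightarrow> D \<noteq> {} \<and> (\<forall>p\<in>D. Opt p \<subseteq> D)"

definition classes :: "'a rel \<Rightarrow> 'a set \<Rightarrow> 'a set set" where
  "classes \<theta> S = (\<lambda>s. \<theta> `` {s}) ` S"

definition congruence_rel :: "'a set \<Rightarrow> ('a \<Rightarrow> 'a set) \<Rightarrow> 'a rel \<Rightarrow> bool" where
  "congruence_rel D Opt \<theta> \<longleftrightarrow> equiv D \<theta> \<and>
     (\<forall>p q. (p, q) \<in> \<theta> \<longrightarrow> classes \<theta> (Opt p) = classes \<theta> (Opt q))"

definition Con :: "'a set \<Rightarrow> ('a \<Rightarrow> 'a set) \<Rightarrow> 'a rel set" where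
  "Con D Opt = {\<theta>. congruence_rel D Opt \<theta>}"

end

theory Submission
  imports Defs
begin

definition bisimr :: "('a \<Rightarrow> 'a set) \<Rightarrow> 'a rel \<Rightarrow> bool" where
  "bisimr Opt \<theta> \<longleftrightarrow> (\<forall>p q. (p, q) \<in> \<theta> \<longrightarrow>
     (\<forall>s\<in>Opt p. \<exists>t\<in>Opt q. (s,t)\<in>\<theta>) \<and> (\<forall>t\<in>Opt q. \<exists>s\<in>Opt p. (s,t)\<in>\<theta>))"

lemma cong_iff_bisim:
  assumes og: "optiongraph D Opt" and eq: "equiv D \<theta>"
  shows "congruence_rel D Opt \<theta> \<longleftrightarrow> bisimr Opt \<theta>"
proof -
  have sub: "\<theta> \<subseteq> D \<times> D" using eq by (simp add: equiv_def refl_on_def)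
  have OD: "p \<in> D \<Longrightarrow> Opt p \<subseteq> D" for p using og by (auto simp: optiongraph_def)
  have ci: "s \<in> D \<Longrightarrow> t \<in> D \<Longrightarrow> ((s,t)\<in>\<theta>) = (\<theta>``{s} = \<theta>``{t})" for s t
    using equiv_class_eq_iff[OF eq] by blast
  have "classes \<theta> (Opt p) = classes \<theta> (Opt q) \<longleftrightarrow>
     (\<forall>s\<in>Opt p. \<exists>t\<in>Opt q. (s,t)\<in>\<theta>) \<and> (\<forall>t\<in>Opt q. \<exists>s\<in>Opt p. (s,t)\<in>\<theta>)"
    if pq: "(p,q) \<in> \<theta>" for p q
  proof -
    have pD: "Opt p \<subseteq> D" and qD: "Opt q \<subseteq> D" using pq sub OD by auto
    show ?thesis
      unfolding classes_def
    proof
      assume h: "(\<lambda>s. \<theta> `` {s}) ` Opt p = (\<lambda>s. \<theta> `` {s}) ` Opt q"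
      show "(\<forall>s\<in>Opt p. \<exists>t\<in>Opt q. (s,t)\<in>\<theta>) \<and> (\<forall>t\<in>Opt q. \<exists>s\<in>Opt p. (s,t)\<in>\<theta>)"
      proof (intro conjI ballI)
        fix s assume s: "s \<in> Opt p"
        then have "\<theta>``{s} \<in> (\<lambda>s. \<theta> `` {s}) ` Opt q" using h by blast
        then obtain t where "t \<in> Opt q" "\<theta>``{s} = \<theta>``{t}" by blast
        then show "\<exists>t\<in>Opt q. (s,t)\<in>\<theta>" using ci s pD qD by blast
      next
        fix t assume t: "t \<in> Opt q"
        then have "\<theta>``{t} \<in> (\<lambda>s. \<theta> `` {s}) ` Opt p" using h by blast
        then obtain s where "s \<in> Opt p" "\<theta>``{t} = \<theta>``{s}" by blast
        then show "\<exists>s\<in>Opt p. (s,t)\<in>\<theta>" using ci t pD qD by blast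
      qed
    next
      assume h: "(\<forall>s\<in>Opt p. \<exists>t\<in>Opt q. (s,t)\<in>\<theta>) \<and> (\<forall>t\<in>Opt q. \<exists>s\<in>Opt p. (s,t)\<in>\<theta>)"
      show "(\<lambda>s. \<theta> `` {s}) ` Opt p = (\<lambda>s. \<theta> `` {s}) ` Opt q"
      proof
        show "(\<lambda>s. \<theta> `` {s}) ` Opt p \<subseteq> (\<lambda>s. \<theta> `` {s}) ` Opt q"
        proof
          fix X assume "X \<in> (\<lambda>s. \<theta> `` {s}) ` Opt p"
          then obtain s where s: "s \<in> Opt p" "X = \<theta>``{s}" by blast
          then obtain t where "t \<in> Opt q" "(s,t)\<in>\<theta>" using h by blast
          then show "X \<in> (\<lambda>s. \<theta> `` {s}) ` Opt q" using ci s pD qD by blast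
        qed
      next
        show "(\<lambda>s. \<theta> `` {s}) ` Opt q \<subseteq> (\<lambda>s. \<theta> `` {s}) ` Opt p"
        proof
          fix X assume "X \<in> (\<lambda>s. \<theta> `` {s}) ` Opt q"
          then obtain t where t: "t \<in> Opt q" "X = \<theta>``{t}" by blast
          then obtain s where "s \<in> Opt p" "(s,t)\<in>\<theta>" using h by blast
          then show "X \<in> (\<lambda>s. \<theta> `` {s}) ` Opt p" using ci t pD qD by blast
        qed
      qed
    qed
  qed
  then show ?thesis using eq unfolding congruence_rel_def bisimr_def by blast
qed

theorem mainTheorem3:
  fixes D :: "'a set" and Opt :: "'a \<Rightarrow> 'a set"
  assumes "optiongraph D Opt"
  shows "congruence_rel D Opt (\<Union> (Con D Opt)) \<and> (\<forall>\<theta>\<in>Con D Opt. \<theta> \<subseteq> \<Union> (Con D Opt))"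
proof -
  let ?U = "\<Union> (Con D Opt)"
  have C: "\<theta> \<in> Con D Opt \<longleftrightarrow> equiv D \<theta> \<and> bisimr Opt \<theta>" for \<theta>
    using cong_iff_bisim[OF assms] by (auto simp: Con_def congruence_rel_def)
  have idC: "Id_on D \<in> Con D Opt"
    using assms unfolding C by (auto simp: equiv_def refl_on_def sym_def trans_def bisimr_def optiongraph_def)
  have Usub: "?U \<subseteq> D \<times> D" using C by (auto simp: equiv_def refl_on_def)
  have Urefl: "Id_on D \<subseteq> ?U" using idC by blast
  have Usym: "sym ?U" using C unfolding sym_def equiv_def by blast
  have Ubis: "bisimr Opt ?U"
    unfolding bisimr_def
  proof (intro allI impI)
    fix p q assume "(p,q) \<in> ?U"
    then obtain \<theta> where th: "\<theta> \<in> Con D Opt" "(p,q) \<in> \<theta>" by blast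
    then have "bisimr Opt \<theta>" using C by blast
    then show "(\<forall>s\<in>Opt p. \<exists>t\<in>Opt q. (s,t)\<in>?U) \<and> (\<forall>t\<in>Opt q. \<exists>s\<in>Opt p. (s,t)\<in>?U)"
      using th unfolding bisimr_def by blast
  qed
  have Tsub: "?U\<^sup>+ \<subseteq> D \<times> D" by (rule trancl_subset_Sigma[OF Usub])
  have Teq: "equiv D (?U\<^sup>+)"
    unfolding equiv_def
  proof (intro conjI)
    show "refl_on D (?U\<^sup>+)" unfolding refl_on_def using Tsub Urefl by blast
    show "?U\<^sup>+ \<subseteq> D \<times> D" by (rule Tsub)
    show "sym (?U\<^sup>+)" using Usym by (simp add: sym_trancl)
    show "trans (?U\<^sup>+)" by simp
  qed
  have Tbis: "bisimr Opt (?U\<^sup>+)"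
    unfolding bisimr_def
  proof (intro allI impI)
    fix p q assume "(p,q) \<in> ?U\<^sup>+"
    then show "(\<forall>s\<in>Opt p. \<exists>t\<in>Opt q. (s,t)\<in>?U\<^sup>+) \<and> (\<forall>t\<in>Opt q. \<exists>s\<in>Opt p. (s,t)\<in>?U\<^sup>+)"
    proof (induction rule: trancl_induct)
      case (base y)
      then show ?case using Ubis unfolding bisimr_def by blast
    next
      case (step y z)
      have "(\<forall>s\<in>Opt y. \<exists>t\<in>Opt z. (s,t)\<in>?U) \<and> (\<forall>t\<in>Opt z. \<exists>s\<in>Opt y. (s,t)\<in>?U)"
        using step.hyps(2) Ubis unfolding bisimr_def by blast
      then show ?case using step.IH by (meson trancl_into_trancl)
    qed
  qed
  have "?U\<^sup>+ \<in> Con D Opt" using C Teq Tbis by blast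
  then have "?U\<^sup>+ \<subseteq> ?U" by blast
  then have "trans ?U" by (meson r_into_trancl' subsetD trans_def trancl_trans)
  then have "equiv D ?U" using Usub Urefl Usym by (auto simp: equiv_def refl_on_def)
  then have "?U \<in> Con D Opt" using C Ubis by blast
  then show ?thesis unfolding Con_def by blast
qed

end
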